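(* Let $K$ be a finite field, let $V$ be a vector space over $K$ of odd dimension $n\geq 5$, and let $\omega$ be an alternating trilinear form on $V$. Then every subspace of $V$ of dimension $\frac{n-1}{2}$ contains a nonzero vector that lies in some two-dimensional $\omega$-singular subspace of $V$.
   Context: A two-dimensional subspace $L\subseteq V$ is $\omega$-singular if $\omega(a,b,v)=0$ for all $a,b\in L$, $v\in V$. *)

theory Defs
  imports "HOL-Analysis.Analysis"
begin

text \<open>V is modelled as K^n, i.e. the type 'k ^ 'n with CARD('n) = n.
  A trilinear form is linear in each argument separately.\<close>

definition trilinear :: "('k::field ^ 'n \<Rightarrow> 'k ^ 'n \<Rightarrow> 'k ^ 'n \<Rightarrow> 'k) \<Rightarrow> bool" where
  "trilinear w \<longleftrightarrow>
     (\<forall>b c. Vector_Spaces.linear (*s) (*) (\<lambda>a. w a b c)) \<and>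
     (\<forall>a c. Vector_Spaces.linear (*s) (*) (\<lambda>b. w a b c)) \<and>
     (\<forall>a b. Vector_Spaces.linear (*s) (*) (\<lambda>c. w a b c))"

text \<open>Alternating: vanishes whenever two of the arguments coincide.\<close>
definition alternating_trilinear :: "('k::field ^ 'n \<Rightarrow> 'k ^ 'n \<Rightarrow> 'k ^ 'n \<Rightarrow> 'k) \<Rightarrow> bool" where
  "alternating_trilinear w \<longleftrightarrow> trilinear w \<and>
     (\<forall>a b. w a a b = 0 \<and> w a b a = 0 \<and> w b a a = 0)"

definition omega_singular :: "('k::field ^ 'n \<Rightarrow> 'k ^ 'n \<Rightarrow> 'k ^ 'n \<Rightarrow> 'k) \<Rightarrow> ('k ^ 'n) set \<Rightarrow> bool" where
  "omega_singular w L \<longleftrightarrow> vec.subspace L \<and> vec.dim L = 2 \<and>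
     (\<forall>a\<in>L. \<forall>b\<in>L. \<forall>v. w a b v = 0)"

end

theory Submission
  imports Defs "HOL-Computational_Algebra.Polynomial" "HOL-Library.FuncSet"
begin

(* ---- part T1 ---- *)

lemma card_one_zero: "of_nat CARD('k::{field,finite}) = (0::'k)"
proof -
  have "(\<Sum>t\<in>UNIV. t) = (\<Sum>t\<in>UNIV. t + (1::'k))"
    by (rule sum.reindex_bij_witness[of _ "\<lambda>t. t + 1" "\<lambda>t. t - 1"]) auto
  also have "\<dots> = (\<Sum>t\<in>UNIV. t) + of_nat CARD('k)"
    by (simp add: sum.distrib)
  finally show ?thesis by simp
qed

lemma fermat_ff: fixes x :: "'k::{field,finite}" assumes "x \<noteq> 0"
  shows "x ^ (CARD('k) - 1) = 1"
proof -
  let ?N = "UNIV - {0::'k}"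
  have cN: "card ?N = CARD('k) - 1" by (simp add: card_Diff_singleton)
  have "(\<Prod>t\<in>?N. t) = (\<Prod>t\<in>?N. x * t)"
    by (rule prod.reindex_bij_witness[of _ "\<lambda>t. x * t" "\<lambda>t. t / x"]) (use assms in auto)
  also have "\<dots> = x ^ card ?N * (\<Prod>t\<in>?N. t)"
    by (simp add: prod.distrib)
  finally have "(x ^ card ?N - 1) * (\<Prod>t\<in>?N. t) = 0" by (simp add: algebra_simps)
  moreover have "(\<Prod>t\<in>?N. t) \<noteq> 0" by simp
  ultimately show ?thesis using cN by simp
qed

lemma sum_pow_ff: fixes e :: nat assumes "e < CARD('k::{field,finite}) - 1"
  shows "(\<Sum>t\<in>(UNIV::'k set). t ^ e) = 0"
proof (cases "e = 0")
  case True thus ?thesis using card_one_zero[where 'k='k] by simp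
next
  case False
  define p :: "'k poly" where "p = monom 1 e - 1"
  have pe: "poly p x = x ^ e - 1" for x by (simp add: p_def poly_monom)
  have dp: "degree p \<le> e" unfolding p_def
    by (intro degree_diff_le) (auto simp: degree_monom_le)
  have "p \<noteq> 0" proof assume "p = 0" then have "poly p 0 = 0" by simp
    then show False using pe[of 0] False by (simp add: zero_power) qed
  then have "card {x. poly p x = 0} \<le> e" using card_poly_roots_bound dp le_trans by metis
  then have c1: "card {x::'k. x ^ e = 1} \<le> e" using pe by simp
  have "\<exists>a::'k. a \<noteq> 0 \<and> a ^ e \<noteq> 1"
  proof (rule ccontr)
    assume "\<not> ?thesis"
    then have "UNIV - {0} \<subseteq> {x::'k. x ^ e = 1}" by auto
    then have "card (UNIV - {0::'k}) \<le> card {x::'k. x ^ e = 1}" by (intro card_mono) auto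
    then show False using c1 assms by (simp add: card_Diff_singleton)
  qed
  then obtain a :: 'k where a: "a \<noteq> 0" "a ^ e \<noteq> 1" by blast
  have "(\<Sum>t\<in>UNIV. t ^ e) = (\<Sum>t\<in>(UNIV::'k set). (a * t) ^ e)"
    by (rule sum.reindex_bij_witness[of _ "\<lambda>t. a * t" "\<lambda>t. t / a"]) (use a in auto)
  also have "\<dots> = a ^ e * (\<Sum>t\<in>UNIV. t ^ e)"
    by (simp add: power_mult_distrib sum_distrib_left)
  finally have "(a ^ e - 1) * (\<Sum>t\<in>(UNIV::'k set). t ^ e) = 0" by (simp add: algebra_simps)
  then show ?thesis using a by simp
qed


(* ---- part T2 ---- *)

definition Ex :: "nat \<Rightarrow> nat \<Rightarrow> (nat \<Rightarrow> nat) set" where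
  "Ex m d = {e \<in> PiE {..<m} (\<lambda>_. {..d}). sum e {..<m} = d}"

definition mon :: "nat \<Rightarrow> (nat \<Rightarrow> nat) \<Rightarrow> (nat \<Rightarrow> 'a::comm_ring_1) \<Rightarrow> 'a" where
  "mon m e x = (\<Prod>i<m. x i ^ e i)"

definition HPoly :: "nat \<Rightarrow> nat \<Rightarrow> ((nat \<Rightarrow> 'a::comm_ring_1) \<Rightarrow> 'a) \<Rightarrow> bool" where
  "HPoly m d f \<longleftrightarrow> (\<exists>c. \<forall>x. f x = (\<Sum>e\<in>Ex m d. c e * mon m e x))"

lemma finite_Ex: "finite (Ex m d)"
  unfolding Ex_def by (rule finite_subset[of _ "PiE {..<m} (\<lambda>_. {..d})"]) (auto intro: finite_PiE)

lemma hp_zero: "HPoly m d (\<lambda>x. 0)"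
  unfolding HPoly_def by (rule exI[of _ "\<lambda>_. 0"]) simp

lemma hp_add: "HPoly m d f \<Longrightarrow> HPoly m d g \<Longrightarrow> HPoly m d (\<lambda>x. f x + g x)"
  unfolding HPoly_def
proof (elim exE)
  fix c c' assume f: "\<forall>x. f x = (\<Sum>e\<in>Ex m d. c e * mon m e x)" and g: "\<forall>x. g x = (\<Sum>e\<in>Ex m d. c' e * mon m e x)"
  show "\<exists>c. \<forall>x. f x + g x = (\<Sum>e\<in>Ex m d. c e * mon m e x)"
    by (rule exI[of _ "\<lambda>e. c e + c' e"]) (simp add: f g sum.distrib algebra_simps)
qed

lemma hp_cmul: "HPoly m d f \<Longrightarrow> HPoly m d (\<lambda>x. a * f x)"
  unfolding HPoly_def
proof (elim exE)
  fix c assume f: "\<forall>x. f x = (\<Sum>e\<in>Ex m d. c e * mon m e x)"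
  show "\<exists>c. \<forall>x. a * f x = (\<Sum>e\<in>Ex m d. c e * mon m e x)"
    by (rule exI[of _ "\<lambda>e. a * c e"]) (simp add: f sum_distrib_left algebra_simps)
qed

lemma hp_sum: "finite J \<Longrightarrow> (\<And>j. j \<in> J \<Longrightarrow> HPoly m d (f j)) \<Longrightarrow> HPoly m d (\<lambda>x. \<Sum>j\<in>J. f j x)"
  by (induction J rule: finite_induct) (auto intro: hp_add hp_zero)

lemma Ex_0: "Ex m 0 = {(\<lambda>i\<in>{..<m}. 0)}"
  unfolding Ex_def by (auto simp: PiE_def extensional_def fun_eq_iff)

lemma hp_const: "HPoly m 0 (\<lambda>x. a)"
  unfolding HPoly_def Ex_0 by (rule exI[of _ "\<lambda>_. a"]) (simp add: mon_def)

lemma hp_var: assumes "i < m" shows "HPoly m 1 (\<lambda>x. x i)"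
proof -
  define u where "u = (\<lambda>j\<in>{..<m}. if j = i then 1 else (0::nat))"
  have uE: "u \<in> Ex m 1"
  proof -
    have "sum u {..<m} = sum (\<lambda>j. if j = i then 1 else 0) {..<m}"
      by (rule sum.cong) (auto simp: u_def)
    also have "\<dots> = 1" using assms by (simp add: sum.delta)
    finally show ?thesis unfolding Ex_def u_def by (auto simp: PiE_def extensional_def)
  qed
  have mu: "mon m u x = x i" for x :: "nat \<Rightarrow> 'a"
  proof -
    have "mon m u x = (\<Prod>j<m. if j = i then x j else 1)"
      unfolding mon_def by (rule prod.cong) (auto simp: u_def)
    also have "\<dots> = x i" using assms by (simp add: prod.delta)
    finally show ?thesis .
  qed
  have "(\<Sum>e\<in>Ex m 1. (if e = u then 1 else 0) * mon m e x) = x i" for x :: "nat \<Rightarrow> 'a"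
  proof -
    have "(\<Sum>e\<in>Ex m 1. (if e = u then 1 else 0) * mon m e x) = (\<Sum>e\<in>Ex m 1. if e = u then mon m e x else 0)"
      by (rule sum.cong) auto
    also have "\<dots> = mon m u x" using uE finite_Ex by (simp add: sum.delta')
    finally show ?thesis using mu by simp
  qed
  then show ?thesis unfolding HPoly_def by (intro exI[of _ "\<lambda>e. if e = u then 1 else 0"]) simp
qed

lemma hp_lin: "HPoly m 1 (\<lambda>x. \<Sum>i<m. a i * x i)"
  by (intro hp_sum hp_cmul hp_var) auto

lemma hp_mult: assumes "HPoly m d f" "HPoly m d' g" shows "HPoly m (d + d') (\<lambda>x. f x * g x)"
proof -
  obtain c where f: "\<And>x. f x = (\<Sum>e\<in>Ex m d. c e * mon m e x)" using assms(1) unfolding HPoly_def by blast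
  obtain c' where g: "\<And>x. g x = (\<Sum>e\<in>Ex m d'. c' e * mon m e x)" using assms(2) unfolding HPoly_def by blast
  define h where "h = (\<lambda>p::(nat\<Rightarrow>nat)\<times>(nat\<Rightarrow>nat). (\<lambda>i\<in>{..<m}. fst p i + snd p i))"
  have hE: "h ` (Ex m d \<times> Ex m d') \<subseteq> Ex m (d + d')"
  proof safe
    fix e e' assume e: "e \<in> Ex m d" and e': "e' \<in> Ex m d'"
    have "sum (h (e, e')) {..<m} = sum (\<lambda>i. e i + e' i) {..<m}"
      by (rule sum.cong) (auto simp: h_def)
    also have "\<dots> = d + d'" using e e' by (simp add: sum.distrib Ex_def)
    finally have s: "sum (h (e, e')) {..<m} = d + d'" .
    have "h (e,e') i \<le> d + d'" if "i < m" for i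
    proof -
      have "e i \<le> d" "e' i \<le> d'" using e e' that by (auto simp: Ex_def PiE_def)
      then show ?thesis using that by (simp add: h_def)
    qed
    then show "h (e, e') \<in> Ex m (d + d')" using s unfolding Ex_def by (auto simp: h_def PiE_def extensional_def)
  qed
  have monh: "mon m (h (e, e')) x = mon m e x * mon m e' x" for e e' and x :: "nat \<Rightarrow> 'a"
    unfolding mon_def h_def by (simp add: power_add prod.distrib)
  define c'' where "c'' = (\<lambda>E. \<Sum>p\<in>{p \<in> Ex m d \<times> Ex m d'. h p = E}. c (fst p) * c' (snd p))"
  show ?thesis unfolding HPoly_def
  proof (intro exI allI)
    fix x :: "nat \<Rightarrow> 'a"
    have "f x * g x = (\<Sum>e\<in>Ex m d. \<Sum>e'\<in>Ex m d'. c e * mon m e x * (c' e' * mon m e' x))"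
      by (simp add: f g sum_product)
    also have "\<dots> = (\<Sum>p\<in>Ex m d \<times> Ex m d'. c (fst p) * mon m (fst p) x * (c' (snd p) * mon m (snd p) x))"
      by (simp add: sum.cartesian_product case_prod_beta)
    also have "\<dots> = (\<Sum>p\<in>Ex m d \<times> Ex m d'. c (fst p) * c' (snd p) * mon m (h p) x)"
      by (intro sum.cong refl) (auto simp: monh)
    also have "\<dots> = (\<Sum>E\<in>Ex m (d+d'). \<Sum>p\<in>{p \<in> Ex m d \<times> Ex m d'. h p = E}. c (fst p) * c' (snd p) * mon m (h p) x)"
      by (rule sum.group[symmetric, OF finite_cartesian_product[OF finite_Ex finite_Ex] finite_Ex hE])
    also have "\<dots> = (\<Sum>E\<in>Ex m (d+d'). c'' E * mon m E x)"
      unfolding c''_def sum_distrib_right by (intro sum.cong refl) auto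
    finally show "f x * g x = (\<Sum>E\<in>Ex m (d+d'). c'' E * mon m E x)" .
  qed
qed

lemma hp_pow: "HPoly m d f \<Longrightarrow> HPoly m (d * k) (\<lambda>x. f x ^ k)"
proof (induction k)
  case 0 then show ?case using hp_const[of m 1] by simp
next
  case (Suc k) then show ?case using hp_mult[of m d f "d * k" "\<lambda>x. f x ^ k"] by (simp add: add.commute)
qed

lemma hp_at_zero: assumes "HPoly m d f" "d \<ge> 1" "\<And>i. i < m \<Longrightarrow> x i = 0" shows "f x = 0"
proof -
  obtain c where f: "\<And>x. f x = (\<Sum>e\<in>Ex m d. c e * mon m e x)" using assms(1) unfolding HPoly_def by blast
  have "mon m e x = 0" if "e \<in> Ex m d" for e
  proof -
    have "\<exists>i<m. e i \<noteq> 0"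
    proof (rule ccontr)
      assume "\<not> ?thesis" then have "sum e {..<m} = 0" by simp
      then show False using that assms(2) by (simp add: Ex_def)
    qed
    then obtain i where i: "i < m" "e i \<noteq> 0" by blast
    show ?thesis unfolding mon_def by (rule prod_zero) (use i assms(3) in \<open>auto intro!: bexI[of _ i] simp: zero_power\<close>)
  qed
  then show ?thesis by (simp add: f)
qed

lemma hp_sum_cube:
  fixes f :: "(nat \<Rightarrow> 'k::{field,finite}) \<Rightarrow> 'k"
  assumes "HPoly m D f" "D < m * (CARD('k) - 1)"
  shows "(\<Sum>x\<in>PiE {..<m} (\<lambda>_. UNIV). f x) = 0"
proof -
  obtain c where f: "\<And>x. f x = (\<Sum>e\<in>Ex m D. c e * mon m e x)" using assms(1) unfolding HPoly_def by blast
  have z: "(\<Sum>x\<in>PiE {..<m} (\<lambda>_. UNIV). mon m e x) = (0::'k)" if "e \<in> Ex m D" for e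
  proof -
    have "\<exists>i<m. e i < CARD('k) - 1"
    proof (rule ccontr)
      assume "\<not> ?thesis"
      then have "sum (\<lambda>_. CARD('k) - 1) {..<m} \<le> sum e {..<m}" by (intro sum_mono) auto
      then show False using that assms(2) by (simp add: Ex_def mult.commute)
    qed
    then obtain i where i: "i < m" "e i < CARD('k) - 1" by blast
    have "(\<Sum>x\<in>PiE {..<m} (\<lambda>_. UNIV). mon m e x) = (\<Prod>i<m. \<Sum>t\<in>(UNIV::'k set). t ^ e i)"
      unfolding mon_def by (rule prod_sum_PiE[symmetric]) auto
    also have "\<dots> = 0" using i sum_pow_ff[of "e i", where 'k='k] by (intro prod_zero) auto
    finally show ?thesis .
  qed
  have "(\<Sum>x\<in>PiE {..<m} (\<lambda>_. UNIV). f x) = (\<Sum>e\<in>Ex m D. c e * (\<Sum>x\<in>PiE {..<m} (\<lambda>_. UNIV). mon m e x))"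
    unfolding f sum_distrib_left by (rule sum.swap)
  also have "\<dots> = 0" using z by simp
  finally show ?thesis .
qed


(* ---- part T3 ---- *)

lemma cw:
  fixes F :: "(nat \<Rightarrow> 'k::{field,finite}) \<Rightarrow> 'k"
  assumes hp: "HPoly m d F" and dm: "d < m" and d1: "d \<ge> 1"
  shows "\<exists>x\<in>PiE {..<m} (\<lambda>_. UNIV). (\<exists>i<m. x i \<noteq> 0) \<and> F x = 0"
proof (rule ccontr)
  assume nz: "\<not> ?thesis"
  let ?C = "PiE {..<m} (\<lambda>_. UNIV::'k set)"
  let ?q = "CARD('k)"
  have q2: "?q \<ge> 2"
  proof -
    have "{0::'k, 1} \<subseteq> UNIV" by simp
    then have "card {0::'k, 1} \<le> ?q" by (intro card_mono) auto
    then show ?thesis by simp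
  qed
  define x0 where "x0 = (\<lambda>i\<in>{..<m}. 0::'k)"
  have x0C: "x0 \<in> ?C" by (simp add: x0_def)
  have Fx0: "F x0 = 0" by (rule hp_at_zero[OF hp d1]) (simp add: x0_def)
  have Z: "{x\<in>?C. F x = 0} = {x0}"
  proof safe
    fix x assume x: "x \<in> ?C" "F x = 0"
    then have "\<forall>i<m. x i = 0" using nz by blast
    then show "x = x0" using x unfolding x0_def by (auto simp: PiE_def extensional_def fun_eq_iff)
  qed (use x0C Fx0 in auto)
  have fin: "finite ?C" by (auto intro: finite_PiE)
  have ind: "1 - F x ^ (?q - 1) = (if F x = 0 then 1 else 0)" for x
    using fermat_ff[of "F x"] q2 by (auto simp: zero_power)
  have "(\<Sum>x\<in>?C. 1 - F x ^ (?q - 1)) = (\<Sum>x\<in>?C. if F x = 0 then 1 else (0::'k))"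
    using ind by simp
  also have "\<dots> = (\<Sum>x\<in>{x\<in>?C. F x = 0}. 1)" by (rule sum.inter_filter[symmetric, OF fin])
  also have "\<dots> = 1" using Z by simp
  finally have A: "(\<Sum>x\<in>?C. 1 - F x ^ (?q - 1)) = 1" .
  have "(\<Sum>x\<in>?C. (1::'k)) = of_nat (card ?C)" by simp
  also have "card ?C = ?q ^ m" by (simp add: card_PiE)
  also have "(of_nat (?q ^ m) :: 'k) = 0" using dm card_one_zero[where 'k='k] by (simp add: of_nat_power)
  finally have B: "(\<Sum>x\<in>?C. (1::'k)) = 0" .
  have "HPoly m (d * (?q - 1)) (\<lambda>x. F x ^ (?q - 1))" by (rule hp_pow[OF hp])
  moreover have "d * (?q - 1) < m * (?q - 1)" using dm q2 by simp
  ultimately have C: "(\<Sum>x\<in>?C. F x ^ (?q - 1)) = 0" by (rule hp_sum_cube)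
  have "(\<Sum>x\<in>?C. 1 - F x ^ (?q - 1)) = 0" using B C by (simp add: sum_subtractf)
  then show False using A by simp
qed


(* ---- part T4 ---- *)

definition del :: "nat \<Rightarrow> 'a list \<Rightarrow> 'a list" where
  "del j xs = take j xs @ drop (Suc j) xs"

lemma length_del[simp]: "j < length xs \<Longrightarrow> length (del j xs) = length xs - 1"
  by (simp add: del_def)

lemma nth_del: "j < length xs \<Longrightarrow> k < length xs - 1 \<Longrightarrow> del j xs ! k = xs ! (if k < j then k else Suc k)"
  by (auto simp: del_def nth_append min_def)

lemma del_0_Cons[simp]: "del 0 (y # ys) = ys" by (simp add: del_def)
lemma del_Suc_Cons[simp]: "del (Suc j) (y # ys) = y # del j ys" by (simp add: del_def)

lemma del_del: "j \<le> k \<Longrightarrow> Suc k < length xs \<Longrightarrow> del k (del j xs) = del j (del (Suc k) xs)"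
  by (intro nth_equalityI) (auto simp: nth_del)

lemma del_eq_adj: "Suc i < length xs \<Longrightarrow> xs ! i = xs ! Suc i \<Longrightarrow> del i xs = del (Suc i) xs"
  by (intro nth_equalityI) (auto simp: nth_del nat_less_le)

lemma set_del: "set (del j xs) \<subseteq> set xs"
  unfolding del_def by (auto dest: in_set_takeD in_set_dropD)

primrec PFn :: "nat \<Rightarrow> ('v \<Rightarrow> 'v \<Rightarrow> 'r::comm_ring_1) \<Rightarrow> 'v list \<Rightarrow> 'r" where
  "PFn 0 \<beta> ys = (if ys = [] then 1 else 0)"
| "PFn (Suc n) \<beta> ys = (case ys of [] \<Rightarrow> 1 | y # zs \<Rightarrow> (\<Sum>j<length zs. (-1)^j * \<beta> y (zs!j) * PFn n \<beta> (del j zs)))"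

lemma PFn_indep: "length ys \<le> n \<Longrightarrow> PFn n \<beta> ys = PFn (length ys) \<beta> ys"
proof (induction n arbitrary: ys rule: less_induct)
  case (less n)
  show ?case
  proof (cases ys)
    case Nil then show ?thesis by (cases n) auto
  next
    case (Cons y zs)
    then obtain n0 where n: "n = Suc n0" and zn: "length zs \<le> n0" using less.prems by (cases n) auto
    have "PFn n0 \<beta> (del j zs) = PFn (length zs) \<beta> (del j zs)" if j: "j < length zs" for j
    proof -
      have l: "length (del j zs) \<le> length zs" using j by simp
      have "PFn n0 \<beta> (del j zs) = PFn (length (del j zs)) \<beta> (del j zs)"
        using less.IH[of n0 "del j zs"] n zn l by simp
      moreover have "PFn (length zs) \<beta> (del j zs) = PFn (length (del j zs)) \<beta> (del j zs)"
        using less.IH[of "length zs" "del j zs"] n zn l by simp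
      ultimately show ?thesis by simp
    qed
    then show ?thesis using Cons n by (auto intro!: sum.cong)
  qed
qed

definition PF :: "('v \<Rightarrow> 'v \<Rightarrow> 'r::comm_ring_1) \<Rightarrow> 'v list \<Rightarrow> 'r" where
  "PF \<beta> ys = PFn (length ys) \<beta> ys"

lemma PF_Nil[simp]: "PF \<beta> [] = 1" by (simp add: PF_def)

lemma PF_Cons: "PF \<beta> (y # ys) = (\<Sum>j<length ys. (-1)^j * \<beta> y (ys!j) * PF \<beta> (del j ys))"
proof -
  have "PFn (length ys) \<beta> (del j ys) = PF \<beta> (del j ys)" if "j < length ys" for j
    unfolding PF_def using that by (intro PFn_indep) simp
  then show ?thesis unfolding PF_def by (auto intro!: sum.cong)
qed

lemma tri_swap: "(\<Sum>j<L. \<Sum>k\<in>{Suc j..<L}. G j k) = (\<Sum>k<L. \<Sum>j<k. G j k :: 'a::comm_monoid_add)"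
proof (induction L)
  case (Suc L)
  have "(\<Sum>j<Suc L. \<Sum>k\<in>{Suc j..<Suc L}. G j k) = (\<Sum>j<L. \<Sum>k\<in>{Suc j..<Suc L}. G j k)"
    by simp
  also have "\<dots> = (\<Sum>j<L. (\<Sum>k\<in>{Suc j..<L}. G j k) + G j L)"
    by (intro sum.cong refl) (simp add: atLeastLessThanSuc, rule add.commute)
  also have "\<dots> = (\<Sum>j<L. \<Sum>k\<in>{Suc j..<L}. G j k) + (\<Sum>j<L. G j L)" by (rule sum.distrib)
  also have "\<dots> = (\<Sum>k<Suc L. \<Sum>j<k. G j k)" using Suc by simp
  finally show ?case .
qed simp

lemma PF_double: fixes \<beta> :: "'v \<Rightarrow> 'v \<Rightarrow> 'r::comm_ring_1" shows
  "PF \<beta> (a # b # ys) = \<beta> a b * PF \<beta> ys +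
     (\<Sum>j<length ys. \<Sum>k<j. (-1)^(j+k) * (\<beta> a (ys!k) * \<beta> b (ys!j) - \<beta> a (ys!j) * \<beta> b (ys!k)) * PF \<beta> (del k (del j ys)))"
proof -
  let ?L = "length ys"
  let ?D = "\<lambda>k j. PF \<beta> (del k (del j ys))"
  have T: "PF \<beta> (b # del j ys) = (\<Sum>k<j. (-1)^k * \<beta> b (ys!k) * ?D k j)
            + (\<Sum>k\<in>{Suc j..<?L}. (-1)^(k - 1) * \<beta> b (ys!k) * ?D j k)" if j: "j < ?L" for j
  proof -
    have "PF \<beta> (b # del j ys) = (\<Sum>k<?L - 1. (-1)^k * \<beta> b (del j ys ! k) * PF \<beta> (del k (del j ys)))"
      using j by (simp add: PF_Cons)
    also have "{..<?L - 1} = {..<j} \<union> {j..<?L - 1}" using j by auto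
    also have "(\<Sum>k\<in>{..<j} \<union> {j..<?L - 1}. (-1)^k * \<beta> b (del j ys ! k) * PF \<beta> (del k (del j ys)))
       = (\<Sum>k<j. (-1)^k * \<beta> b (del j ys ! k) * PF \<beta> (del k (del j ys)))
         + (\<Sum>k\<in>{j..<?L - 1}. (-1)^k * \<beta> b (del j ys ! k) * PF \<beta> (del k (del j ys)))"
      by (rule sum.union_disjoint) auto
    also have "(\<Sum>k<j. (-1)^k * \<beta> b (del j ys ! k) * PF \<beta> (del k (del j ys)))
        = (\<Sum>k<j. (-1)^k * \<beta> b (ys!k) * ?D k j)"
      using j by (intro sum.cong refl) (simp add: nth_del)
    also have "(\<Sum>k\<in>{j..<?L - 1}. (-1)^k * \<beta> b (del j ys ! k) * PF \<beta> (del k (del j ys)))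
        = (\<Sum>k\<in>{j..<?L - 1}. (-1)^k * \<beta> b (ys ! Suc k) * ?D j (Suc k))"
      using j by (intro sum.cong refl) (simp add: nth_del, subst del_del, auto)
    also have "\<dots> = (\<Sum>k\<in>{Suc j..<Suc (?L - 1)}. (-1)^(k - 1) * \<beta> b (ys ! k) * ?D j k)"
      by (subst sum.shift_bounds_Suc_ivl) simp
    also have "Suc (?L - 1) = ?L" using j by simp
    finally show ?thesis .
  qed
  have "PF \<beta> (a # b # ys) = \<beta> a b * PF \<beta> ys + (\<Sum>j<?L. (-1)^(Suc j) * \<beta> a (ys!j) * PF \<beta> (b # del j ys))"
    by (simp add: PF_Cons sum.lessThan_Suc_shift del: sum.lessThan_Suc)
  also have "(\<Sum>j<?L. (-1)^(Suc j) * \<beta> a (ys!j) * PF \<beta> (b # del j ys))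
     = (\<Sum>j<?L. \<Sum>k<j. (-1)^(Suc j) * \<beta> a (ys!j) * ((-1)^k * \<beta> b (ys!k) * ?D k j))
       + (\<Sum>j<?L. \<Sum>k\<in>{Suc j..<?L}. (-1)^(Suc j) * \<beta> a (ys!j) * ((-1)^(k - 1) * \<beta> b (ys!k) * ?D j k))"
    by (simp add: T sum.distrib sum_distrib_left distrib_left)
  also have "(\<Sum>j<?L. \<Sum>k\<in>{Suc j..<?L}. (-1)^(Suc j) * \<beta> a (ys!j) * ((-1)^(k - 1) * \<beta> b (ys!k) * ?D j k))
     = (\<Sum>k<?L. \<Sum>j<k. (-1)^(Suc j) * \<beta> a (ys!j) * ((-1)^(k - 1) * \<beta> b (ys!k) * ?D j k))"
    by (rule tri_swap)
  also have "\<dots> = (\<Sum>j<?L. \<Sum>k<j. (-1)^(j+k) * (\<beta> a (ys!k) * \<beta> b (ys!j)) * ?D k j)"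
  proof (intro sum.cong refl)
    fix j k assume "j \<in> {..<?L}" "k \<in> {..<j}"
    then have "Suc k + (j - 1) = j + k" by simp
    then have e: "(-1::'r)^(Suc k) * (-1)^(j - 1) = (-1)^(j+k)" by (metis power_add)
    have "(-1)^(Suc k) * \<beta> a (ys!k) * ((-1)^(j - 1) * \<beta> b (ys!j) * ?D k j) = ((-1::'r)^(Suc k) * (-1)^(j - 1)) * (\<beta> a (ys!k) * \<beta> b (ys!j)) * ?D k j"
      by (simp only: mult_ac)
    then show "(-1)^(Suc k) * \<beta> a (ys!k) * ((-1)^(j - 1) * \<beta> b (ys!j) * ?D k j) = (-1)^(j+k) * (\<beta> a (ys!k) * \<beta> b (ys!j)) * ?D k j"
      by (simp only: e)
  qed
  also have "(\<Sum>j<?L. \<Sum>k<j. (-1)^(Suc j) * \<beta> a (ys!j) * ((-1)^k * \<beta> b (ys!k) * ?D k j))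
      = (\<Sum>j<?L. \<Sum>k<j. - ((-1)^(j+k) * (\<beta> a (ys!j) * \<beta> b (ys!k)) * ?D k j))"
    by (intro sum.cong refl) (simp add: power_add algebra_simps)
  finally have "PF \<beta> (a # b # ys) = \<beta> a b * PF \<beta> ys +
     ((\<Sum>j<?L. \<Sum>k<j. - ((-1)^(j+k) * (\<beta> a (ys!j) * \<beta> b (ys!k)) * ?D k j))
      + (\<Sum>j<?L. \<Sum>k<j. (-1)^(j+k) * (\<beta> a (ys!k) * \<beta> b (ys!j)) * ?D k j))" .
  also have "(\<Sum>j<?L. \<Sum>k<j. - ((-1)^(j+k) * (\<beta> a (ys!j) * \<beta> b (ys!k)) * ?D k j))
      + (\<Sum>j<?L. \<Sum>k<j. (-1)^(j+k) * (\<beta> a (ys!k) * \<beta> b (ys!j)) * ?D k j)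
      = (\<Sum>j<?L. \<Sum>k<j. - ((-1)^(j+k) * (\<beta> a (ys!j) * \<beta> b (ys!k)) * ?D k j)
             + (-1)^(j+k) * (\<beta> a (ys!k) * \<beta> b (ys!j)) * ?D k j)"
    by (simp only: sum.distrib)
  also have "\<dots> = (\<Sum>j<?L. \<Sum>k<j. (-1)^(j+k) * (\<beta> a (ys!k) * \<beta> b (ys!j) - \<beta> a (ys!j) * \<beta> b (ys!k)) * ?D k j)"
    by (intro sum.cong refl) (simp add: algebra_simps)
  finally show ?thesis .
qed


(* ---- part T5 ---- *)

lemma del_upd_same: "del j (xs[j := x]) = del j xs"
  by (intro nth_equalityI) (auto simp: del_def nth_append)

lemma del_upd: "j < length xs \<Longrightarrow> i < length xs \<Longrightarrow> i \<noteq> j \<Longrightarrow>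
   del j (xs[i := x]) = (del j xs)[(if i < j then i else i - 1) := x]"
  by (intro nth_equalityI) (auto simp: nth_del nth_list_update)

locale bil =
  fixes \<beta> :: "'k::field ^ 'n \<Rightarrow> 'k ^ 'n \<Rightarrow> 'r::comm_ring_1" and sc :: "'k \<Rightarrow> 'r"
  assumes addL: "\<beta> (a + b) c = \<beta> a c + \<beta> b c" and addR: "\<beta> c (a + b) = \<beta> c a + \<beta> c b"
    and scL: "\<beta> (t *s a) c = sc t * \<beta> a c" and scR: "\<beta> c (t *s a) = sc t * \<beta> c a"
    and alt: "\<beta> a a = 0"
begin

lemma lin_PF: "i < length zs \<Longrightarrow> PF \<beta> (zs[i := x + y]) = PF \<beta> (zs[i := x]) + PF \<beta> (zs[i := y])
   \<and> PF \<beta> (zs[i := t *s x]) = sc t * PF \<beta> (zs[i := x])"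
proof (induction "length zs" arbitrary: zs i x y t rule: less_induct)
  case less
  obtain z ys where zs: "zs = z # ys" using less.prems by (cases zs) auto
  show ?case
  proof (cases i)
    case 0
    show ?thesis unfolding zs 0
      by (simp add: PF_Cons addL scL sum.distrib sum_distrib_left algebra_simps)
  next
    case (Suc i')
    have i': "i' < length ys" using less.prems zs Suc by simp
    let ?T = "\<lambda>j x. (-1)^j * \<beta> z (ys[i' := x] ! j) * PF \<beta> (del j (ys[i' := x]))"
    have T: "?T j (x + y) = ?T j x + ?T j y \<and> ?T j (t *s x) = sc t * ?T j x" if j: "j < length ys" for j
    proof (cases "j = i'")
      case True
      then show ?thesis using i' by (simp add: del_upd_same addR scR algebra_simps)
    next
      case False
      let ?i = "if i' < j then i' else i' - 1"
      have d: "del j (ys[i' := w]) = (del j ys)[?i := w]" for w by (rule del_upd[OF j i']) (use False in auto)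
      have il: "?i < length (del j ys)" using j i' False by auto
      have "length (del j ys) < length zs" using zs j by simp
      note IH = less.hyps[OF this il]
      show ?thesis using False IH[of x y t] by (simp add: d algebra_simps)
    qed
    have "PF \<beta> (zs[i := x + y]) = (\<Sum>j<length ys. ?T j (x + y))" by (simp add: zs Suc PF_Cons)
    also have "\<dots> = (\<Sum>j<length ys. ?T j x) + (\<Sum>j<length ys. ?T j y)"
      using T by (simp add: sum.distrib)
    also have "\<dots> = PF \<beta> (zs[i := x]) + PF \<beta> (zs[i := y])" by (simp add: zs Suc PF_Cons)
    finally have 1: "PF \<beta> (zs[i := x + y]) = PF \<beta> (zs[i := x]) + PF \<beta> (zs[i := y])" .
    have "PF \<beta> (zs[i := t *s x]) = (\<Sum>j<length ys. ?T j (t *s x))" by (simp add: zs Suc PF_Cons)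
    also have "\<dots> = sc t * (\<Sum>j<length ys. ?T j x)"
      using T by (simp add: sum_distrib_left)
    also have "\<dots> = sc t * PF \<beta> (zs[i := x])" by (simp add: zs Suc PF_Cons)
    finally show ?thesis using 1 by simp
  qed
qed

lemma adj_PF: "Suc i < length zs \<Longrightarrow> zs ! i = zs ! Suc i \<Longrightarrow> PF \<beta> zs = 0"
proof (induction "length zs" arbitrary: zs i rule: less_induct)
  case less
  obtain z ys where zs: "zs = z # ys" using less.prems by (cases zs) auto
  show ?case
  proof (cases i)
    case 0
    then obtain ys' where ys: "ys = z # ys'" using less.prems zs by (cases ys) auto
    have "\<beta> z (ys' ! k) * \<beta> z (ys' ! j) - \<beta> z (ys' ! j) * \<beta> z (ys' ! k) = 0" for j k
      by (simp add: mult.commute)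
    then show ?thesis unfolding zs ys PF_double by (simp add: alt)
  next
    case (Suc i')
    have i': "Suc i' < length ys" and eq: "ys ! i' = ys ! Suc i'" using less.prems zs Suc by auto
    let ?T = "\<lambda>j. (-1)^j * \<beta> z (ys ! j) * PF \<beta> (del j ys)"
    have z: "?T j = 0" if j: "j \<in> {..<length ys} - {i', Suc i'}" for j
    proof -
      let ?i = "if j < i' then i' - 1 else i'"
      have "Suc ?i < length (del j ys)" using j i' by auto
      moreover have "del j ys ! ?i = del j ys ! Suc ?i" using j i' eq by (auto simp: nth_del)
      moreover have "length (del j ys) < length zs" using zs j by simp
      ultimately have "PF \<beta> (del j ys) = 0" using less.hyps by blast
      then show ?thesis by simp
    qed
    have "PF \<beta> zs = (\<Sum>j<length ys. ?T j)" by (simp add: zs PF_Cons)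
    also have "\<dots> = (\<Sum>j\<in>{i', Suc i'}. ?T j)"
      by (rule sum.mono_neutral_right) (use i' z in auto)
    also have "\<dots> = 0" using del_eq_adj[OF i' eq] eq by simp
    finally show ?thesis .
  qed
qed

end

definition mlin :: "nat \<Rightarrow> (('k::field ^ 'n) list \<Rightarrow> 'k) \<Rightarrow> bool" where
  "mlin N \<Phi> \<longleftrightarrow>
   (\<forall>zs i x y. length zs = N \<longrightarrow> i < N \<longrightarrow> \<Phi> (zs[i := x + y]) = \<Phi> (zs[i := x]) + \<Phi> (zs[i := y])) \<and>
   (\<forall>zs i t x. length zs = N \<longrightarrow> i < N \<longrightarrow> \<Phi> (zs[i := t *s x]) = t * \<Phi> (zs[i := x])) \<and>
   (\<forall>zs i. length zs = N \<longrightarrow> Suc i < N \<longrightarrow> zs ! i = zs ! Suc i \<longrightarrow> \<Phi> zs = 0)"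

lemma mlin_of_bil:
  assumes "bil \<beta> sc" and "\<And>t r. \<phi> (sc t * r) = t * \<phi> r" and "\<And>r s. \<phi> (r + s) = \<phi> r + \<phi> s" and "\<phi> 0 = 0"
  shows "mlin N (\<lambda>zs. \<phi> (PF \<beta> zs))"
  unfolding mlin_def using bil.lin_PF[OF assms(1)] bil.adj_PF[OF assms(1)] assms(2-4) by auto


(* ---- part T6 ---- *)

lemma anti:
  fixes f :: "'a::ab_group_add \<Rightarrow> 'a \<Rightarrow> 'b::ab_group_add"
  assumes "\<And>a b c. f (a + b) c = f a c + f b c" "\<And>a b c. f c (a + b) = f c a + f c b" "\<And>c. f c c = 0"
  shows "f a b = - f b a"
proof -
  have "0 = f (a + b) (a + b)" using assms(3) by simp
  also have "\<dots> = f a a + f a b + f b a + f b b" by (simp add: assms(1,2))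
  finally show ?thesis using assms(3) by (simp add: eq_neg_iff_add_eq_0 add.commute)
qed

context fixes N :: nat and \<Phi> :: "('k::field ^ 'n) list \<Rightarrow> 'k" assumes ml: "mlin N \<Phi>"
begin

lemma ml_add: "length zs = N \<Longrightarrow> i < N \<Longrightarrow> \<Phi> (zs[i := x + y]) = \<Phi> (zs[i := x]) + \<Phi> (zs[i := y])"
  using ml unfolding mlin_def by blast
lemma ml_scale: "length zs = N \<Longrightarrow> i < N \<Longrightarrow> \<Phi> (zs[i := t *s x]) = t * \<Phi> (zs[i := x])"
  using ml unfolding mlin_def by blast
lemma ml_adj: "length zs = N \<Longrightarrow> Suc i < N \<Longrightarrow> zs ! i = zs ! Suc i \<Longrightarrow> \<Phi> zs = 0"
  using ml unfolding mlin_def by blast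

lemma ml_pair:
  assumes zs: "length zs = N" and ij: "i < N" "j < N" "i \<noteq> j" and z: "\<And>c. \<Phi> (zs[i := c, j := c]) = 0"
  shows "\<Phi> (zs[i := a, j := b]) = - \<Phi> (zs[i := b, j := a])"
proof -
  let ?f = "\<lambda>a b. \<Phi> (zs[i := a, j := b])"
  have 1: "?f (a + b) c = ?f a c + ?f b c" for a b c
  proof -
    have "zs[i := w, j := c] = (zs[j := c])[i := w]" for w using ij by (simp add: list_update_swap)
    then show ?thesis using ml_add[of "zs[j := c]" i a b] zs ij by simp
  qed
  have 2: "?f c (a + b) = ?f c a + ?f c b" for a b c
    using ml_add[of "zs[i := c]" j a b] zs ij by simp
  show ?thesis by (rule anti[of ?f, OF 1 2 z])
qed

lemma ml_alt: assumes "length zs = N" "i < j" "j < N" "zs ! i = zs ! j" shows "\<Phi> zs = 0"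
proof -
  obtain d where j: "j = Suc (i + d)" using assms(2) less_iff_Suc_add by auto
  show ?thesis using assms(1,3,4) unfolding j
  proof (induction d arbitrary: zs)
    case 0 then show ?case using ml_adj by simp
  next
    case (Suc d)
    let ?j' = "Suc (i + d)" and ?j = "Suc (i + Suc d)"
    define zs' where "zs' = zs[?j' := zs ! ?j, ?j := zs ! ?j']"
    have l: "length zs' = N" using Suc.prems by (simp add: zs'_def)
    have "zs' ! i = zs' ! ?j'" using Suc.prems by (simp add: zs'_def nth_list_update)
    then have z': "\<Phi> zs' = 0" using Suc.IH[OF l] Suc.prems by simp
    have zz: "\<Phi> (zs[?j' := c, ?j := c]) = 0" for c
      by (rule ml_adj[of _ ?j']) (use Suc.prems in auto)
    have "\<Phi> (zs[?j' := zs ! ?j', ?j := zs ! ?j]) = - \<Phi> (zs[?j' := zs ! ?j, ?j := zs ! ?j'])"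
      by (rule ml_pair) (use Suc.prems zz in auto)
    then show ?case using z' by (simp add: zs'_def)
  qed
qed

lemma ml_swap: assumes "length zs = N" "i < N" "j < N" "i \<noteq> j"
  shows "\<Phi> (zs[i := zs ! j, j := zs ! i]) = - \<Phi> zs"
proof -
  have z: "\<Phi> (zs[i := c, j := c]) = 0" for c
  proof (cases "i < j")
    case True then show ?thesis using assms by (intro ml_alt[of _ i j]) auto
  next
    case False then show ?thesis using assms by (intro ml_alt[of _ j i]) auto
  qed
  have "\<Phi> (zs[i := zs ! i, j := zs ! j]) = - \<Phi> (zs[i := zs ! j, j := zs ! i])"
    by (rule ml_pair) (use assms z in auto)
  then show ?thesis by simp
qed

lemma ml_sum: assumes "finite V" "length zs = N" "i < N"
  shows "\<Phi> (zs[i := (\<Sum>v\<in>V. c v *s v)]) = (\<Sum>v\<in>V. c v * \<Phi> (zs[i := v]))"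
  using assms(1)
proof (induction V rule: finite_induct)
  case empty
  have "\<Phi> (zs[i := 0 *s 0]) = 0 * \<Phi> (zs[i := 0])" by (rule ml_scale) (use assms in auto)
  then show ?case by simp
next
  case (insert v V)
  then show ?case using ml_add[OF assms(2,3)] ml_scale[OF assms(2,3)] by simp
qed

lemma ml_perm: assumes b: "length b = N" "distinct b" "\<Phi> b = 0"
  shows "length zs = N \<Longrightarrow> distinct zs \<Longrightarrow> set zs = set b \<Longrightarrow> \<Phi> zs = 0"
proof (induction "card {i. i < N \<and> zs ! i \<noteq> b ! i}" arbitrary: zs rule: less_induct)
  case less
  show ?case
  proof (cases "{i. i < N \<and> zs ! i \<noteq> b ! i} = {}")
    case True
    then have "zs = b" using less.prems b by (intro nth_equalityI) auto
    then show ?thesis using b by simp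
  next
    case False
    then obtain i where i: "i < N" "zs ! i \<noteq> b ! i" by blast
    have "b ! i \<in> set zs" using less.prems b i by simp
    then obtain j where j: "j < length zs" "zs ! j = b ! i" by (metis in_set_conv_nth)
    then have j: "j < N" "zs ! j = b ! i" using less.prems by auto
    have ij: "i \<noteq> j" using i j by auto
    define zs' where "zs' = zs[i := zs ! j, j := zs ! i]"
    have l': "length zs' = N" using less.prems by (simp add: zs'_def)
    have d': "distinct zs'" unfolding zs'_def by (subst distinct_swap) (use less.prems i j in auto)
    have s': "set zs' = set b" unfolding zs'_def by (subst set_swap) (use less.prems i j in auto)
    have sub: "{k. k < N \<and> zs' ! k \<noteq> b ! k} \<subset> {k. k < N \<and> zs ! k \<noteq> b ! k}"
    proof
      show "{k. k < N \<and> zs' ! k \<noteq> b ! k} \<subseteq> {k. k < N \<and> zs ! k \<noteq> b ! k}"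
      proof safe
        fix k assume k: "k < N" "zs' ! k \<noteq> b ! k" "zs ! k = b ! k"
        have "k \<noteq> i" using k i by auto
        moreover have "k \<noteq> j"
        proof
          assume "k = j"
          then have "b ! j = b ! i" using k j by simp
          then show False using b ij i j by (simp add: nth_eq_iff_index_eq)
        qed
        ultimately show False using k by (simp add: zs'_def)
      qed
      have "i \<notin> {k. k < N \<and> zs' ! k \<noteq> b ! k}" using i j ij less.prems by (simp add: zs'_def nth_list_update)
      then show "{k. k < N \<and> zs' ! k \<noteq> b ! k} \<noteq> {k. k < N \<and> zs ! k \<noteq> b ! k}" using i by blast
    qed
    then have "card {k. k < N \<and> zs' ! k \<noteq> b ! k} < card {k. k < N \<and> zs ! k \<noteq> b ! k}"
      by (intro psubset_card_mono) auto
    then have "\<Phi> zs' = 0" using less.hyps l' d' s' by blast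
    moreover have "\<Phi> zs' = - \<Phi> zs" unfolding zs'_def by (rule ml_swap) (use less.prems i j ij in auto)
    ultimately show ?thesis by simp
  qed
qed

lemma ml_zero: assumes b: "length b = N" "distinct b" "\<Phi> b = 0"
  and zs: "length zs = N" "set zs \<subseteq> vec.span (set b)"
  shows "\<Phi> zs = 0"
proof -
  have P: "k \<le> N \<Longrightarrow> length zs = N \<Longrightarrow> (\<forall>i<k. zs ! i \<in> vec.span (set b)) \<Longrightarrow> (\<forall>i. k \<le> i \<longrightarrow> i < N \<longrightarrow> zs ! i \<in> set b) \<Longrightarrow> \<Phi> zs = 0" for k zs
  proof (induction k arbitrary: zs)
    case 0
    show ?case
    proof (cases "distinct zs")
      case True
      have "set zs \<subseteq> set b" using 0 by (auto simp: in_set_conv_nth)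
      moreover have "card (set zs) = card (set b)" using True b 0 by (simp add: distinct_card)
      ultimately have "set zs = set b" by (intro card_subset_eq) auto
      then show ?thesis using ml_perm[OF b] 0 True by blast
    next
      case False
      then obtain i j where ij: "i < N" "j < N" "i \<noteq> j" "zs ! i = zs ! j" using 0 by (auto simp: distinct_conv_nth)
      show ?thesis
      proof (cases "i < j")
        case True then show ?thesis using ij 0 by (intro ml_alt[of _ i j]) auto
      next
        case False then show ?thesis using ij 0 by (intro ml_alt[of _ j i]) auto
      qed
    qed
  next
    case (Suc k)
    have k: "k < N" using Suc.prems by simp
    have "zs ! k \<in> vec.span (set b)" using Suc.prems by simp
    then obtain c where c: "zs ! k = (\<Sum>v\<in>set b. c v *s v)" by (auto simp: vec.span_finite)
    have "zs = zs[k := (\<Sum>v\<in>set b. c v *s v)]" by (metis c list_update_id)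
    then have "\<Phi> zs = (\<Sum>v\<in>set b. c v * \<Phi> (zs[k := v]))"
      using ml_sum[of "set b" zs k c] Suc.prems k by simp
    also have "\<dots> = 0"
    proof (intro sum.neutral ballI)
      fix v assume v: "v \<in> set b"
      have "\<Phi> (zs[k := v]) = 0"
        by (rule Suc.IH) (use Suc.prems k v in \<open>auto simp: nth_list_update\<close>)
      then show "c v * \<Phi> (zs[k := v]) = 0" by simp
    qed
    finally show ?case .
  qed
  show ?thesis by (rule P[of N]) (use zs in auto)
qed

end


(* ---- part T7 ---- *)

definition nondeg :: "('k::field ^ 'n \<Rightarrow> 'k ^ 'n \<Rightarrow> 'k) \<Rightarrow> ('k ^ 'n) set \<Rightarrow> bool" where
  "nondeg \<beta> S \<longleftrightarrow> (\<forall>x\<in>S. (\<forall>y\<in>S. \<beta> x y = 0) \<longrightarrow> x = 0)"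

context bil begin

lemma skew: "\<beta> a b = - \<beta> b a"
  by (rule anti[of \<beta>]) (auto simp: addL addR alt)

lemma zeroR[simp]: "\<beta> c 0 = 0"
proof -
  have "\<beta> c (0 + 0) = \<beta> c 0 + \<beta> c 0" by (rule addR)
  then show ?thesis by simp
qed

lemma zeroL[simp]: "\<beta> 0 c = 0"
  using skew[of 0 c] by simp

lemma subspace_kerR: "vec.subspace {y. \<beta> x y = 0}"
  unfolding vec.subspace_def by (auto simp: addR scR)

lemma subspace_kerL: "vec.subspace {y. \<beta> y x = 0}"
  unfolding vec.subspace_def by (auto simp: addL scL)

lemma kerR_span: "(\<And>b. b \<in> B \<Longrightarrow> \<beta> x b = 0) \<Longrightarrow> y \<in> vec.span B \<Longrightarrow> \<beta> x y = 0"
  using vec.span_minimal[OF _ subspace_kerR, of B x] by auto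

end

lemma nondeg_PF:
  assumes bl: "bil \<beta> id"
  shows "vec.subspace S \<Longrightarrow> nondeg \<beta> S \<Longrightarrow>
    even (vec.dim S) \<and> (\<exists>s. set s \<subseteq> S \<and> length s = vec.dim S \<and> PF \<beta> s \<noteq> 0)"
proof (induction "vec.dim S" arbitrary: S rule: less_induct)
  case less
  interpret bil \<beta> id by (rule bl)
  show ?case
  proof (cases "\<exists>z\<in>S. z \<noteq> 0")
    case False
    then have sp: "S \<subseteq> vec.span {}" by auto
    have d: "vec.dim S = 0" using vec.dim_le_card[OF sp finite.emptyI] by simp
    show ?thesis unfolding d by (auto intro!: exI[of _ "[]"])
  next
    case True
    then obtain z1 where z1: "z1 \<in> S" "z1 \<noteq> 0" by blast
    then obtain y where y: "y \<in> S" "\<beta> z1 y \<noteq> 0" using less.prems(2) unfolding nondeg_def by blast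
    define z2 where "z2 = (1 / \<beta> z1 y) *s y"
    have z2S: "z2 \<in> S" using y less.prems(1) unfolding z2_def by (simp add: vec.subspace_scale)
    have b12: "\<beta> z1 z2 = 1" using y by (simp add: z2_def scR)
    have b21: "\<beta> z2 z1 = -1" using skew[of z2 z1] b12 by simp
    define S' where "S' = {x\<in>S. \<beta> z1 x = 0 \<and> \<beta> z2 x = 0}"
    have subS': "vec.subspace S'"
      using less.prems(1) unfolding S'_def vec.subspace_def by (auto simp: addR scR)
    have S'S: "S' \<subseteq> S" by (auto simp: S'_def)
    obtain B' where B': "B' \<subseteq> S'" "vec.independent B'" "S' \<subseteq> vec.span B'" "card B' = vec.dim S'"
      using vec.basis_exists by blast
    have finB': "finite B'" using B'(2) by (rule vec.finiteI_independent)
    have spanB': "vec.span B' \<subseteq> S'" using B'(1) subS' by (rule vec.span_minimal)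
    have z2n: "z2 \<notin> vec.span B'" using spanB' b12 by (auto simp: S'_def)
    have z1n: "z1 \<notin> vec.span (insert z2 B')"
    proof
      assume "z1 \<in> vec.span (insert z2 B')"
      then obtain k where "z1 - k *s z2 \<in> vec.span B'" by (auto simp: vec.span_breakdown_eq)
      then have "z1 - k *s z2 \<in> S'" using spanB' by auto
      then have "\<beta> z2 (z1 - k *s z2) = 0" by (simp add: S'_def)
      moreover have "\<beta> z2 (z1 - k *s z2) = \<beta> z2 z1 - k * \<beta> z2 z2"
        using addR[of z2 z1 "- (k *s z2)"] scR[of z2 "-k" z2] by (simp add: alt)
      ultimately show False using b21 alt by simp
    qed
    let ?B = "insert z1 (insert z2 B')"
    have indB: "vec.independent ?B"
      using B'(2) z1n z2n by (simp add: vec.independent_insert vec.span_base)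
    have BS: "?B \<subseteq> S" using z1 z2S B'(1) S'S by auto
    have SB: "S \<subseteq> vec.span ?B"
    proof
      fix x assume x: "x \<in> S"
      define x' where "x' = x + \<beta> x z1 *s z2 - \<beta> x z2 *s z1"
      have "\<beta> z1 x' = \<beta> z1 x + \<beta> x z1"
        unfolding x'_def diff_conv_add_uminus using b12
        by (simp add: addR scR alt flip: vec.scale_minus_left)
      then have 1: "\<beta> z1 x' = 0" using skew[of z1 x] by simp
      have "\<beta> z2 x' = \<beta> z2 x + \<beta> x z2"
        unfolding x'_def diff_conv_add_uminus using b21
        by (simp add: addR scR alt flip: vec.scale_minus_left)
      then have 2: "\<beta> z2 x' = 0" using skew[of z2 x] by simp
      have "x' \<in> S" unfolding x'_def using x z1 z2S less.prems(1)
        by (intro vec.subspace_diff vec.subspace_add vec.subspace_scale) auto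
      then have "x' \<in> S'" using 1 2 by (simp add: S'_def)
      then have x'B: "x' \<in> vec.span ?B" using B'(3) vec.span_mono[of B' ?B] by auto
      have "x = x' - \<beta> x z1 *s z2 + \<beta> x z2 *s z1" by (simp add: x'_def)
      also have "\<dots> \<in> vec.span ?B" using x'B
        by (intro vec.span_add vec.span_diff vec.span_scale) (auto intro: vec.span_base)
      finally show "x \<in> vec.span ?B" .
    qed
    have cB: "card ?B = vec.dim S" by (rule vec.basis_card_eq_dim[OF BS SB indB])
    have z1B: "z1 \<notin> insert z2 B'" using z1n by (auto intro: vec.span_base)
    have z2B: "z2 \<notin> B'" using z2n by (auto intro: vec.span_base)
    have cB2: "card ?B = Suc (Suc (card B'))" using z1B z2B finB' by simp
    have dimS': "vec.dim S' < vec.dim S" using cB cB2 B'(4) by simp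
    have nd': "nondeg \<beta> S'"
      unfolding nondeg_def
    proof (intro ballI impI)
      fix x assume x: "x \<in> S'" and h: "\<forall>y\<in>S'. \<beta> x y = 0"
      have "\<beta> x b = 0" if "b \<in> ?B" for b
      proof -
        have "\<beta> x z1 = 0" using x skew[of x z1] by (simp add: S'_def)
        moreover have "\<beta> x z2 = 0" using x skew[of x z2] by (simp add: S'_def)
        ultimately show ?thesis using that h B'(1) by auto
      qed
      then have "\<forall>y\<in>S. \<beta> x y = 0" using SB kerR_span by blast
      then show "x = 0" using less.prems(2) x S'S unfolding nondeg_def by blast
    qed
    obtain s' where s': "set s' \<subseteq> S'" "length s' = vec.dim S'" "PF \<beta> s' \<noteq> 0"
      and ev: "even (vec.dim S')" using less.hyps[OF dimS' subS' nd'] by blast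
    have z1s: "\<beta> z1 (s' ! k) = 0" if "k < length s'" for k
    proof -
      have "s' ! k \<in> set s'" using that by simp
      then show ?thesis using s'(1) by (auto simp: S'_def)
    qed
    have "PF \<beta> (z1 # z2 # s') = PF \<beta> s'"
      unfolding PF_double using b12 z1s by simp
    moreover have "vec.dim S = Suc (Suc (vec.dim S'))" using cB cB2 B'(4) by simp
    ultimately show ?thesis using s' ev z1 z2S S'S
      by (intro conjI exI[of _ "z1 # z2 # s'"]) auto
  qed
qed


(* ---- part T8 ---- *)

context fixes w :: "'k::field ^ 'n \<Rightarrow> 'k ^ 'n \<Rightarrow> 'k ^ 'n \<Rightarrow> 'k"
  assumes tri: "alternating_trilinear w"
begin

lemma l1: "w (a + a') b c = w a b c + w a' b c" "w (t *s a) b c = t * w a b c"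
  using tri unfolding alternating_trilinear_def trilinear_def Vector_Spaces.linear_iff by auto
lemma l2: "w a (b + b') c = w a b c + w a b' c" "w a (t *s b) c = t * w a b c"
  using tri unfolding alternating_trilinear_def trilinear_def Vector_Spaces.linear_iff by auto
lemma l3: "w a b (c + c') = w a b c + w a b c'" "w a b (t *s c) = t * w a b c"
  using tri unfolding alternating_trilinear_def trilinear_def Vector_Spaces.linear_iff by auto
lemma al: "w a a c = 0" "w a b a = 0" "w b a a = 0"
  using tri unfolding alternating_trilinear_def by auto

lemma bil23: "bil (\<lambda>b c. w a b c) id"
  by unfold_locales (auto simp: l2 l3 al)
lemma bil12: "bil (\<lambda>a b. w a b c) id"
  by unfold_locales (auto simp: l1 l2 al)

lemma skew12: "w a b c = - w b a c"
  using bil.skew[OF bil12] .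
lemma skew23: "w a b c = - w a c b"
  using bil.skew[OF bil23] .

lemma sum1: "finite I \<Longrightarrow> w (\<Sum>i\<in>I. f i) b c = (\<Sum>i\<in>I. w (f i) b c)"
proof (induction I rule: finite_induct)
  case empty
  have "w (0 *s 0) b c = 0 * w 0 b c" by (rule l1(2))
  then show ?case by simp
qed (simp add: l1)

lemma bilB: "bil (\<lambda>a b. [:w v a b, w u a b:]) (\<lambda>t. [:t:])"
  by unfold_locales (auto simp: l2 l3 al)

end

lemma neg1_pow_poly: "((-1)::'a::comm_ring_1 poly) ^ j = [:(-1) ^ j:]"
  by (induction j) (auto simp: algebra_simps)

lemma coeff_term0: fixes a b :: "'a::comm_ring_1" shows "coeff ((-1) ^ j * [:a, b:] * P) 0 = (-1) ^ j * a * coeff P 0"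
  unfolding neg1_pow_poly by (simp add: coeff_mult_0)

lemma coeff_term1: fixes a b :: "'a::comm_ring_1" shows "coeff ((-1) ^ j * [:a, b:] * P) 1 = (-1) ^ j * (a * coeff P 1 + b * coeff P 0)"
  unfolding neg1_pow_poly by (simp add: coeff_mult algebra_simps)

lemma PF_coeff0: "coeff (PF B zs) 0 = PF (\<lambda>a b. coeff (B a b) 0) zs"
proof (induction "length zs" arbitrary: zs rule: less_induct)
  case less
  show ?case
  proof (cases zs)
    case Nil then show ?thesis by simp
  next
    case (Cons y ys)
    have "coeff (PF B (del j ys)) 0 = PF (\<lambda>a b. coeff (B a b) 0) (del j ys)" if "j < length ys" for j
      using less.hyps[of "del j ys"] that Cons by simp
    then show ?thesis unfolding Cons PF_Cons coeff_sum
      by (intro sum.cong refl) (simp add: neg1_pow_poly coeff_mult_0)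
  qed
qed

lemma hp_cong: "HPoly m d f \<Longrightarrow> (\<And>x. f x = g x) \<Longrightarrow> HPoly m d g"
proof -
  assume "HPoly m d f" "\<And>x. f x = g x"
  moreover have "f = g" using \<open>\<And>x. f x = g x\<close> by (rule ext)
  ultimately show ?thesis by simp
qed

context fixes w :: "'k::field ^ 'n \<Rightarrow> 'k ^ 'n \<Rightarrow> 'k ^ 'n \<Rightarrow> 'k"
  assumes tri: "alternating_trilinear w"
begin

lemma hp_w: "HPoly m 1 (\<lambda>x. w (\<Sum>i<m. x i *s wl ! i) y z)"
proof (rule hp_cong[OF hp_lin[of m "\<lambda>i. w (wl ! i) y z"]])
  fix x :: "nat \<Rightarrow> 'k"
  show "(\<Sum>i<m. w (wl ! i) y z * x i) = w (\<Sum>i<m. x i *s wl ! i) y z"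
    by (simp add: sum1[OF tri] l1[OF tri] mult.commute)
qed

lemma hp_PF:
  "length zs = 2 * k \<Longrightarrow>
    HPoly m k (\<lambda>x. coeff (PF (\<lambda>a b. [:w (\<Sum>i<m. x i *s wl ! i) a b, w u a b:]) zs) 0) \<and>
    HPoly m (k - 1) (\<lambda>x. coeff (PF (\<lambda>a b. [:w (\<Sum>i<m. x i *s wl ! i) a b, w u a b:]) zs) 1) \<and>
    (k = 0 \<longrightarrow> (\<forall>x. coeff (PF (\<lambda>a b. [:w (\<Sum>i<m. x i *s wl ! i) a b, w u a b:]) zs) 1 = 0))"
proof (induction k arbitrary: zs)
  case 0
  then have "zs = []" by simp
  then show ?case using hp_const[of m 1] hp_zero[of m 0] by simp
next
  case (Suc k)
  let ?v = "\<lambda>x. \<Sum>i<m. x i *s wl ! i"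
  let ?B = "\<lambda>x a b. [:w (?v x) a b, w u a b:]"
  obtain y ys where zs: "zs = y # ys" using Suc.prems by (cases zs) auto
  have lys: "length ys = Suc (2 * k)" using Suc.prems zs by simp
  have IH: "HPoly m k (\<lambda>x. coeff (PF (?B x) (del j ys)) 0) \<and>
    HPoly m (k - 1) (\<lambda>x. coeff (PF (?B x) (del j ys)) 1) \<and>
    (k = 0 \<longrightarrow> (\<forall>x. coeff (PF (?B x) (del j ys)) 1 = 0))" if "j < length ys" for j
    using Suc.IH[of "del j ys"] that lys by simp
  have c0: "coeff (PF (?B x) zs) 0 = (\<Sum>j<length ys. (-1)^j * w (?v x) y (ys ! j) * coeff (PF (?B x) (del j ys)) 0)" for x
    unfolding zs PF_Cons coeff_sum by (intro sum.cong refl) (rule coeff_term0)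
  have c1: "coeff (PF (?B x) zs) 1 = (\<Sum>j<length ys. (-1)^j * (w (?v x) y (ys ! j) * coeff (PF (?B x) (del j ys)) 1
        + w u y (ys ! j) * coeff (PF (?B x) (del j ys)) 0))" for x
    unfolding zs PF_Cons coeff_sum by (intro sum.cong refl) (rule coeff_term1)
  have H0: "HPoly m (Suc k) (\<lambda>x. coeff (PF (?B x) zs) 0)"
  proof (rule hp_cong[OF _ c0[symmetric]], rule hp_sum, simp)
    fix j assume j: "j \<in> {..<length ys}"
    have "HPoly m (1 + k) (\<lambda>x. w (?v x) y (ys ! j) * coeff (PF (?B x) (del j ys)) 0)"
      by (rule hp_mult[OF hp_w]) (use IH j in auto)
    then have "HPoly m (Suc k) (\<lambda>x. (-1)^j * (w (?v x) y (ys ! j) * coeff (PF (?B x) (del j ys)) 0))"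
      by (intro hp_cmul) simp
    then show "HPoly m (Suc k) (\<lambda>x. (-1)^j * w (?v x) y (ys ! j) * coeff (PF (?B x) (del j ys)) 0)"
      by (simp add: mult.assoc)
  qed
  have H1: "HPoly m k (\<lambda>x. coeff (PF (?B x) zs) 1)"
  proof (rule hp_cong[OF _ c1[symmetric]], rule hp_sum, simp)
    fix j assume j: "j \<in> {..<length ys}"
    have A: "HPoly m k (\<lambda>x. w (?v x) y (ys ! j) * coeff (PF (?B x) (del j ys)) 1)"
    proof (cases k)
      case 0
      then have "\<forall>x. coeff (PF (?B x) (del j ys)) 1 = 0" using IH j by auto
      then show ?thesis using 0 by (intro hp_cong[OF hp_zero]) simp
    next
      case (Suc k')
      have "HPoly m (1 + k') (\<lambda>x. w (?v x) y (ys ! j) * coeff (PF (?B x) (del j ys)) 1)"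
        by (rule hp_mult[OF hp_w]) (use IH j Suc in auto)
      then show ?thesis using Suc by simp
    qed
    have "HPoly m k (\<lambda>x. w u y (ys ! j) * coeff (PF (?B x) (del j ys)) 0)"
      by (rule hp_cmul) (use IH j in auto)
    then have "HPoly m k (\<lambda>x. w (?v x) y (ys ! j) * coeff (PF (?B x) (del j ys)) 1 + w u y (ys ! j) * coeff (PF (?B x) (del j ys)) 0)"
      by (rule hp_add[OF A])
    then show "HPoly m k (\<lambda>x. (-1)^j * (w (?v x) y (ys ! j) * coeff (PF (?B x) (del j ys)) 1 + w u y (ys ! j) * coeff (PF (?B x) (del j ys)) 0))"
      by (rule hp_cmul)
  qed
  show ?case using H0 H1 by simp
qed

end


(* ---- part T9 ---- *)

lemma indep_not_in_span: "vec.independent B \<Longrightarrow> x \<in> B \<Longrightarrow> x \<in> vec.span (B - {x}) \<Longrightarrow> False"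
  using vec.dependent_def by blast

context fixes w :: "'k::field ^ 'n \<Rightarrow> 'k ^ 'n \<Rightarrow> 'k ^ 'n \<Rightarrow> 'k"
  assumes tri: "alternating_trilinear w"
begin

lemma nonvanish:
  assumes H: "vec.subspace H" "vec.dim H = 2 * m"
    and dec: "\<And>z. \<exists>c. z - c *s u \<in> H"
    and v: "v \<in> H" "v \<noteq> 0"
    and NS: "\<And>b. (\<forall>z. w v b z = 0) \<Longrightarrow> b \<in> vec.span {v}"
    and bH: "length bH = 2 * m" "distinct bH" "vec.span (set bH) = H"
  shows "coeff (PF (\<lambda>a b. [:w v a b, w u a b:]) bH) 1 \<noteq> 0"
proof -
  let ?\<beta> = "\<lambda>a b. w v a b"
  interpret bil ?\<beta> id by (rule bil23[OF tri])
  note al = al[OF tri] and l3 = l3[OF tri]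
  have H0: "0 \<in> H" using H(1) by (rule vec.subspace_0)
  \<comment> \<open>(a) complement T of v in H\<close>
  have iv: "vec.independent {v}" using v by simp
  obtain BT where BT: "{v} \<subseteq> BT" "BT \<subseteq> H" "vec.independent BT" "H \<subseteq> vec.span BT"
    using vec.maximal_independent_subset_extend[of "{v}" H] iv v by auto
  have finBT: "finite BT" using BT(3) by (rule vec.finiteI_independent)
  have cBT: "card BT = 2 * m" using vec.basis_card_eq_dim[OF BT(2) BT(4) BT(3)] H by simp
  define T where "T = vec.span (BT - {v})"
  have subT: "vec.subspace T" by (simp add: T_def)
  have dimT: "vec.dim T = 2 * m - 1"
  proof -
    have "vec.independent (BT - {v})" using BT(3) by (rule vec.independent_mono) auto
    then have "vec.dim T = card (BT - {v})" by (simp add: T_def vec.dim_eq_card_independent)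
    then show ?thesis using cBT BT(1) finBT by simp
  qed
  have TH: "T \<subseteq> H" unfolding T_def using BT(2) H(1) by (intro vec.span_minimal) auto
  have m1: "m \<ge> 1" using cBT BT(1) finBT by (cases m) auto
  \<comment> \<open>(b) degenerate element h\<close>
  have "\<not> nondeg ?\<beta> T"
  proof
    assume "nondeg ?\<beta> T"
    then have "even (vec.dim T)" using nondeg_PF[OF bil23[OF tri] subT] by blast
    then show False using dimT m1 by simp
  qed
  then obtain h where h: "h \<in> T" "\<forall>t\<in>T. ?\<beta> h t = 0" "h \<noteq> 0" unfolding nondeg_def by blast
  have hH: "h \<in> H" using h TH by auto
  \<comment> \<open>(c) h is in the radical on H\<close>
  have hR: "?\<beta> h y = 0" if y: "y \<in> H" for y
  proof -
    have "y \<in> vec.span (insert v (BT - {v}))" using y BT(1,4) by (auto simp: insert_absorb)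
    then obtain k where k: "y - k *s v \<in> T" unfolding T_def using vec.span_breakdown_eq by blast
    have "?\<beta> h y = ?\<beta> h ((y - k *s v) + k *s v)" by simp
    also have "\<dots> = ?\<beta> h (y - k *s v) + k * ?\<beta> h v" by (simp only: l3)
    finally have "?\<beta> h y = ?\<beta> h (y - k *s v) + k * ?\<beta> h v" .
    then show ?thesis using h(2) k al(2)[of v h] by simp
  qed
  \<comment> \<open>(d) h not a multiple of v\<close>
  have hv: "h \<notin> vec.span {v}"
  proof
    assume "h \<in> vec.span {v}"
    then obtain c where c: "h = c *s v" by (auto simp: vec.span_singleton)
    have "c \<noteq> 0" using h(3) c by auto
    then have "v = (1 / c) *s h" using c by simp
    then have "v \<in> T" using h(1) subT by (simp add: vec.subspace_scale)
    then show False using indep_not_in_span[OF BT(3)] BT(1) by (auto simp: T_def)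
  qed
  \<comment> \<open>(e) pairing with u\<close>
  have hu: "w v h u \<noteq> 0"
  proof
    assume hu0: "w v h u = 0"
    have "\<forall>z. w v h z = 0"
    proof
      fix z
      obtain c where c: "z - c *s u \<in> H" using dec by blast
      have "w v h z = w v h ((z - c *s u) + c *s u)" by simp
      also have "\<dots> = w v h (z - c *s u) + c * w v h u" by (simp only: l3)
      finally have "w v h z = w v h (z - c *s u) + c * w v h u" .
      then show "w v h z = 0" using hR[OF c] hu0 by simp
    qed
    then show False using NS hv by blast
  qed
  \<comment> \<open>(f) complement S of span {v,h}\<close>
  have "h \<noteq> v" using hv vec.span_base[of v "{v}"] by auto
  then have "vec.independent (insert h {v})" using iv hv by (simp add: vec.independent_insert)
  moreover have "insert h {v} = {v, h}" by auto
  ultimately have ivh: "vec.independent {v, h}" by simp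
  have vhH: "{v, h} \<subseteq> H" using v hH by auto
  obtain BS where BS: "{v, h} \<subseteq> BS" "BS \<subseteq> H" "vec.independent BS" "H \<subseteq> vec.span BS"
    using vec.maximal_independent_subset_extend[OF vhH ivh] by blast
  have finBS: "finite BS" using BS(3) by (rule vec.finiteI_independent)
  have cBS: "card BS = 2 * m" using vec.basis_card_eq_dim[OF BS(2) BS(4) BS(3)] H by simp
  have vneh: "v \<noteq> h" using hv vec.span_base[of v "{v}"] by auto
  define S where "S = vec.span (BS - {v, h})"
  have subS: "vec.subspace S" by (simp add: S_def)
  have dimS: "vec.dim S = 2 * m - 2"
  proof -
    have "vec.independent (BS - {v, h})" using BS(3) by (rule vec.independent_mono) auto
    then have "vec.dim S = card (BS - {v, h})" by (simp add: S_def vec.dim_eq_card_independent)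
    then show ?thesis using cBS BS(1) finBS vneh by (simp add: card_Diff_subset)
  qed
  have SH: "S \<subseteq> H" unfolding S_def using BS(2) H(1) by (intro vec.span_minimal) auto
  \<comment> \<open>(g) nondegeneracy on S\<close>
  have ndS: "nondeg ?\<beta> S"
    unfolding nondeg_def
  proof (intro ballI impI)
    fix s assume sS: "s \<in> S" and hs: "\<forall>t\<in>S. ?\<beta> s t = 0"
    have sH: "s \<in> H" using sS SH by auto
    have sR: "?\<beta> s y = 0" if y: "y \<in> H" for y
    proof (rule kerR_span[of BS])
      fix b assume b: "b \<in> BS"
      show "?\<beta> s b = 0"
      proof (cases "b = v")
        case True then show ?thesis using al(2)[of v s] by simp
      next
        case False
        show ?thesis
        proof (cases "b = h")
          case True then show ?thesis using skew[of s h] hR[OF sH] by simp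
        next
          case False
          then have "b \<in> S" using b \<open>b \<noteq> v\<close> unfolding S_def by (intro vec.span_base) auto
          then show ?thesis using hs by simp
        qed
      qed
    qed (use y BS(4) in auto)
    define k where "k = ?\<beta> s u / ?\<beta> h u"
    define s' where "s' = s - k *s h"
    have s'z: "w v s' z = 0" for z
    proof -
      obtain c where c: "z - c *s u \<in> H" using dec by blast
      have s'e: "s' = s + (-k) *s h" unfolding s'_def by (simp add: vec.scale_minus_left)
      have e1: "w v s' y = w v s y - k * w v h y" for y
        unfolding s'e by (simp only: addL scL id_apply) simp
      have "w v s' z = w v s' ((z - c *s u) + c *s u)" by simp
      also have "\<dots> = w v s' (z - c *s u) + c * w v s' u" by (simp only: l3)
      finally have 1: "w v s' z = w v s' (z - c *s u) + c * w v s' u" .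
      have 2: "w v s' (z - c *s u) = 0" using e1 sR[OF c] hR[OF c] by simp
      have 3: "w v s' u = 0" using e1 hu by (simp add: k_def)
      show ?thesis using 1 2 3 by simp
    qed
    then have "s' \<in> vec.span {v}" using NS by blast
    then obtain a where a: "s' = a *s v" by (auto simp: vec.span_singleton)
    have sa: "s - k *s h = a *s v" using a by (simp add: s'_def)
    have sS1: "s \<in> vec.span (BS - {v})" using sS unfolding S_def
      by (rule rev_subsetD) (rule vec.span_mono, auto)
    have sS2: "s \<in> vec.span (BS - {h})" using sS unfolding S_def
      by (rule rev_subsetD) (rule vec.span_mono, auto)
    have a0: "a = 0"
    proof (rule ccontr)
      assume a0: "a \<noteq> 0"
      have "(1 / a) *s (s - k *s h) = v" using a0 by (simp only: sa vec.scale_scale) simp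
      moreover have "(1 / a) *s (s - k *s h) \<in> vec.span (BS - {v})"
      proof -
        have "h \<in> vec.span (BS - {v})" using BS(1) vneh by (intro vec.span_base) auto
        then show ?thesis using sS1 by (intro vec.span_diff vec.span_scale)
      qed
      ultimately show False using indep_not_in_span[OF BS(3)] BS(1) by auto
    qed
    then have sk: "s = k *s h" using sa by simp
    have k0: "k = 0"
    proof (rule ccontr)
      assume k0: "k \<noteq> 0"
      have "(1 / k) *s s = h" using k0 by (simp only: sk vec.scale_scale) simp
      moreover have "(1 / k) *s s \<in> vec.span (BS - {h})" using sS2 by (rule vec.span_scale)
      ultimately show False using indep_not_in_span[OF BS(3)] BS(1) by auto
    qed
    show "s = 0" using sk k0 by simp
  qed
  \<comment> \<open>(h) Pfaffian on S\<close>
  obtain sl where sl: "set sl \<subseteq> S" "length sl = 2 * m - 2" "PF ?\<beta> sl \<noteq> 0"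
    using nondeg_PF[OF bil23[OF tri] subS ndS] dimS by auto
  \<comment> \<open>(i) value on the adapted list\<close>
  let ?BB = "\<lambda>a b. [:w v a b, w u a b:]"
  let ?\<Phi> = "\<lambda>zs. coeff (PF ?BB zs) 1"
  have c0: "coeff (PF ?BB zs) 0 = PF ?\<beta> zs" for zs
    by (simp add: PF_coeff0)
  have hz: "PF ?\<beta> (h # zs) = 0" if "set zs \<subseteq> H" for zs
  proof -
    have "\<forall>x<length zs. w v h (zs ! x) = 0" using that hR nth_mem by blast
    then show ?thesis unfolding PF_Cons by (intro sum.neutral ballI) auto
  qed
  have "?\<Phi> (v # h # sl) = (\<Sum>j<Suc (length sl). (-1)^j * (w v v ((h # sl) ! j) * coeff (PF ?BB (del j (h # sl))) 1
        + w u v ((h # sl) ! j) * coeff (PF ?BB (del j (h # sl))) 0))"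
    unfolding PF_Cons coeff_sum by (simp only: coeff_term1 length_Cons)
  also have "\<dots> = (\<Sum>j<Suc (length sl). (-1)^j * (w u v ((h # sl) ! j) * PF ?\<beta> (del j (h # sl))))"
    by (simp add: al c0)
  also have "\<dots> = w u v h * PF ?\<beta> sl"
  proof -
    have "PF ?\<beta> (del (Suc j) (h # sl)) = 0" if "j < length sl" for j
    proof -
      have "set (del j sl) \<subseteq> H" using set_del[of j sl] sl(1) SH by auto
      then show ?thesis using hz by simp
    qed
    then show ?thesis by (simp add: sum.lessThan_Suc_shift del: sum.lessThan_Suc)
  qed
  finally have Pad: "?\<Phi> (v # h # sl) = w u v h * PF ?\<beta> sl" .
  have "w u v h = w v h u" using skew12[OF tri, of u v h] skew23[OF tri, of v u h] by simp
  then have Pad0: "?\<Phi> (v # h # sl) \<noteq> 0" using Pad hu sl(3) by simp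
  \<comment> \<open>(j) transfer to the fixed basis\<close>
  have ml: "mlin (2 * m) ?\<Phi>"
    by (rule mlin_of_bil[OF bilB[OF tri]]) (auto simp: coeff_mult)
  show ?thesis
  proof
    assume "?\<Phi> bH = 0"
    moreover have "length (v # h # sl) = 2 * m" using sl(2) m1 by simp
    moreover have "set (v # h # sl) \<subseteq> vec.span (set bH)" using bH(3) v hH sl(1) SH by auto
    ultimately have "?\<Phi> (v # h # sl) = 0" using ml_zero[OF ml bH(1,2)] by blast
    then show False using Pad0 by simp
  qed
qed

end


(* ---- part T10 ---- *)

lemma dim_UNIV_vec: "vec.dim (UNIV :: ('k::field ^ 'n) set) = CARD('n)"
  by (simp add: vec.dim_UNIV card_cart_basis)

theorem mainTheorem5:
  fixes w :: "'k::{field,finite} ^ 'n \<Rightarrow> 'k ^ 'n \<Rightarrow> 'k ^ 'n \<Rightarrow> 'k"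
    and W :: "('k ^ 'n) set"
  assumes "odd CARD('n)" and "CARD('n) \<ge> 5"
    and "alternating_trilinear w"
    and "vec.subspace W" and "vec.dim W = (CARD('n) - 1) div 2"
  shows "\<exists>v\<in>W. v \<noteq> 0 \<and> (\<exists>L. omega_singular w L \<and> v \<in> L)"
proof -
  note tri = assms(3)
  define m where "m = (CARD('n) - 1) div 2"
  have n: "CARD('n) = 2 * m + 1" using assms(1) unfolding m_def by presburger
  have m2: "m \<ge> 2" using assms(2) n by simp
  have dW: "vec.dim W = m" using assms(5) m_def by simp
  obtain BW where BW: "BW \<subseteq> W" "vec.independent BW" "W \<subseteq> vec.span BW" "card BW = vec.dim W"
    using vec.basis_exists by blast
  have finBW: "finite BW" using BW(2) by (rule vec.finiteI_independent)
  have spW: "vec.span BW = W" using vec.span_subspace[OF BW(1) BW(3) assms(4)] .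
  obtain wl where wl: "set wl = BW" "distinct wl" using finite_distinct_list[OF finBW] by blast
  have lwl: "length wl = m" using distinct_card[OF wl(2)] wl(1) BW(4) dW by simp
  \<comment> \<open>a vector outside W\<close>
  have WU: "W \<noteq> UNIV"
  proof
    assume "W = UNIV"
    then have "vec.dim W = CARD('n)" using dim_UNIV_vec by simp
    then show False using dW n by simp
  qed
  then obtain u where uW: "u \<notin> W" by blast
  have "u \<notin> vec.span BW" using uW spW by simp
  then have iB1: "vec.independent (insert u BW)" by (rule vec.independent_insertI[OF _ BW(2)])
  obtain B where B: "insert u BW \<subseteq> B" "B \<subseteq> UNIV" "vec.independent B" "UNIV \<subseteq> vec.span B"
    by (rule vec.maximal_independent_subset_extend[OF subset_UNIV iB1])
  have finB: "finite B" using B(3) by (rule vec.finiteI_independent)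
  have cB: "card B = 2 * m + 1" using vec.basis_card_eq_dim[OF B(2) B(4) B(3)] n by (simp add: card_cart_basis)
  define H where "H = vec.span (B - {u})"
  have subH: "vec.subspace H" by (simp add: H_def)
  have dH: "vec.dim H = 2 * m"
  proof -
    have "vec.independent (B - {u})" using B(3) by (rule vec.independent_mono) auto
    then have "vec.dim H = card (B - {u})" by (simp add: H_def vec.dim_eq_card_independent)
    then show ?thesis using cB B(1) finB by simp
  qed
  have dec: "\<exists>c. z - c *s u \<in> H" for z
  proof -
    have "z \<in> vec.span (insert u (B - {u}))" using B(1,4) by (auto simp: insert_absorb)
    then show ?thesis unfolding H_def using vec.span_breakdown_eq by blast
  qed
  have uBW: "u \<notin> BW" using uW BW(1) by auto
  have WH: "W \<subseteq> H" unfolding H_def spW[symmetric] using B(1) uBW by (intro vec.span_mono) auto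
  obtain bH where bH: "set bH = B - {u}" "distinct bH" using finite_distinct_list[of "B - {u}"] finB by blast
  have lbH: "length bH = 2 * m" using bH cB B(1) finB distinct_card[OF bH(2)] by simp
  have sbH: "vec.span (set bH) = H" by (simp add: bH H_def)
  \<comment> \<open>the polynomial\<close>
  define F where "F = (\<lambda>x. coeff (PF (\<lambda>a b. [:w (\<Sum>i<m. x i *s wl ! i) a b, w u a b:]) bH) 1)"
  have hF: "HPoly m (m - 1) F" unfolding F_def using hp_PF[OF tri lbH, where wl=wl and u=u and m=m] by blast
  have "\<exists>x\<in>PiE {..<m} (\<lambda>_. UNIV). (\<exists>i<m. x i \<noteq> 0) \<and> F x = 0"
    by (rule cw[OF hF]) (use m2 in auto)
  then obtain x where x: "x \<in> PiE {..<m} (\<lambda>_. UNIV)" "\<exists>i<m. x i \<noteq> 0" "F x = 0" by blast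
  define v where "v = (\<Sum>i<m. x i *s wl ! i)"
  have wlW: "wl ! i \<in> W" if "i < m" for i using wl BW(1) lwl that nth_mem by blast
  have vW: "v \<in> W" unfolding v_def using wlW assms(4)
    by (intro vec.subspace_sum vec.subspace_scale) auto
  have v0: "v \<noteq> 0"
  proof
    assume v0: "v = 0"
    obtain i where i: "i < m" "x i \<noteq> 0" using x(2) by blast
    have "v = x i *s wl ! i + (\<Sum>j\<in>{..<m} - {i}. x j *s wl ! j)"
      unfolding v_def using i by (simp add: sum.remove)
    then have e: "x i *s wl ! i = - (\<Sum>j\<in>{..<m} - {i}. x j *s wl ! j)" using v0 by (simp add: eq_neg_iff_add_eq_0)
    have "(\<Sum>j\<in>{..<m} - {i}. x j *s wl ! j) \<in> vec.span (BW - {wl ! i})"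
    proof (intro vec.span_sum vec.span_scale vec.span_base)
      fix j assume j: "j \<in> {..<m} - {i}"
      then have "wl ! j \<noteq> wl ! i" using wl(2) i lwl by (simp add: nth_eq_iff_index_eq)
      then show "wl ! j \<in> BW - {wl ! i}" using j wl lwl by auto
    qed
    then have "(1 / x i) *s (x i *s wl ! i) \<in> vec.span (BW - {wl ! i})"
      unfolding e by (intro vec.span_scale vec.span_neg)
    then have "wl ! i \<in> vec.span (BW - {wl ! i})" using i by (simp add: vec.scale_scale)
    moreover have "wl ! i \<in> BW" using i wl lwl by auto
    ultimately show False using indep_not_in_span[OF BW(2)] by blast
  qed
  \<comment> \<open>v lies on a singular line\<close>
  have "\<exists>b. (\<forall>z. w v b z = 0) \<and> b \<notin> vec.span {v}"
  proof (rule ccontr)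
    assume "\<not> ?thesis"
    then have NS: "\<And>b. (\<forall>z. w v b z = 0) \<Longrightarrow> b \<in> vec.span {v}" by blast
    have "coeff (PF (\<lambda>a b. [:w v a b, w u a b:]) bH) 1 \<noteq> 0"
      by (rule nonvanish[OF tri subH dH dec _ v0 NS lbH bH(2) sbH]) (use vW WH in auto)
    then show False using x(3) by (simp add: F_def v_def)
  qed
  then obtain b where b: "\<forall>z. w v b z = 0" "b \<notin> vec.span {v}" by blast
  define L where "L = vec.span {v, b}"
  have bv: "b \<noteq> v" using b(2) vec.span_base[of v "{v}"] by auto
  have "vec.independent (insert b {v})" using v0 b(2) by (simp add: vec.independent_insert bv)
  moreover have "insert b {v} = {v, b}" by auto
  ultimately have ivb: "vec.independent {v, b}" by simp
  have dL: "vec.dim L = 2" unfolding L_def using vec.dim_span_eq_card_independent[OF ivb] bv by simp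
  have zero: "w a c z = 0" if "a \<in> L" "c \<in> L" for a c z
  proof -
    interpret g: bil "\<lambda>a c. w a c z" id by (rule bil12[OF tri])
    have base: "w a' c' z = 0" if "a' \<in> {v, b}" "c' \<in> {v, b}" for a' c'
      using that al[OF tri] b(1) skew12[OF tri, of b v z] by auto
    have "w a' c z = 0" if "a' \<in> {v, b}" for a'
      by (rule g.kerR_span[of "{v, b}"]) (use base that \<open>c \<in> L\<close> L_def in auto)
    then have "{v, b} \<subseteq> {a. w a c z = 0}" by auto
    then have "vec.span {v, b} \<subseteq> {a. w a c z = 0}" by (rule vec.span_minimal[OF _ g.subspace_kerL])
    then show ?thesis using \<open>a \<in> L\<close> L_def by auto
  qed
  have "omega_singular w L" unfolding omega_singular_def using dL zero by (simp add: L_def)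
  moreover have "v \<in> L" unfolding L_def by (rule vec.span_base) simp
  ultimately show ?thesis using vW v0 by blast
qed


end
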